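(* There exist absolute constants $c>0$ and $k_0$ such that for all integers $k\ge k_0$, all $\varepsilon\in(0,1)$ and all $\delta\in(0,1/4)$, the $(\varepsilon,\delta)$-sample complexity of estimating the Shannon entropy $H(\vec p)=\sum_{i=1}^k p_i\log\frac1{p_i}$ over $\Delta_k$ satisfies \[ C_H(\varepsilon,\delta)\ge c\,\log\frac1\delta\cdot\frac{\log^2 k}{\varepsilon^2}. \]
   Context: $\Delta_k$ is the set of probability distributions $\vec p=(p_1,\dots,p_k)$ on $[k]=\{1,\dots,k\}$; $\log$ is the natural logarithm. An estimator is any map $\hat f:[k]^*\to\mathbb{R}$ from finite sequences over $[k]$. For a property $f:\Delta_k\to\mathbb{R}$, the $(\varepsilon,\delta)$-sample complexity is \[ C_f(\varepsilon,\delta):=\min_{\hat f}\min\{n:\ \Pr_{X^n\sim\vec p}(|\hat f(X^n)-f(\vec p)|>\varepsilon)\le\delta\ \ \forall\vec p\in\Delta_k\}, \] where $X^n$ denotes $n$ i.i.d. samples from $\vec p$. *)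

theory Defs
  imports Complex_Main "HOL-Library.Extended_Real"
begin

text \<open>Probability simplex on [k] = {1..k}; values of p outside {1..k} are irrelevant.\<close>
definition simplex :: "nat \<Rightarrow> (nat \<Rightarrow> real) set" where
  "simplex k = {p. (\<forall>i\<in>{1..k}. 0 \<le> p i) \<and> (\<Sum>i=1..k. p i) = 1}"

text \<open>Shannon entropy (natural log); for p i = 0 the term is 0 * ln(1/0) = 0.\<close>
definition shannon_entropy :: "nat \<Rightarrow> (nat \<Rightarrow> real) \<Rightarrow> real" where
  "shannon_entropy k p = (\<Sum>i=1..k. p i * ln (1 / p i))"

definition seqs :: "nat \<Rightarrow> nat \<Rightarrow> nat list set" where
  "seqs k n = {xs. length xs = n \<and> set xs \<subseteq> {1..k}}"

definition iid_prob :: "nat \<Rightarrow> (nat \<Rightarrow> real) \<Rightarrow> nat \<Rightarrow> (nat list \<Rightarrow> bool) \<Rightarrow> real" where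
  "iid_prob k p n A = (\<Sum>xs\<in>{xs\<in>seqs k n. A xs}. \<Prod>j<n. p (xs ! j))"

definition estimates_with :: "nat \<Rightarrow> ((nat \<Rightarrow> real) \<Rightarrow> real) \<Rightarrow> (nat list \<Rightarrow> real)
    \<Rightarrow> real \<Rightarrow> real \<Rightarrow> nat \<Rightarrow> bool" where
  "estimates_with k f fh eps delta n \<longleftrightarrow>
     (\<forall>p\<in>simplex k. iid_prob k p n (\<lambda>xs. \<bar>fh xs - f p\<bar> > eps) \<le> delta)"

text \<open>(eps,delta)-sample complexity: min over estimators of the least successful n
  (equivalently the least n for which some estimator succeeds); +\<infinity> if none exists.\<close>
definition sample_complexity :: "nat \<Rightarrow> ((nat \<Rightarrow> real) \<Rightarrow> real) \<Rightarrow> real \<Rightarrow> real \<Rightarrow> ereal" where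
  "sample_complexity k f eps delta =
     Inf {ereal (real n) | n. \<exists>fh. estimates_with k f fh eps delta n}"

end

theory Submission
  imports Defs "HOL-Analysis.Convex"
begin


lemma seqs_Suc: "seqs k (Suc n) = (\<lambda>(x,xs). x#xs) ` ({1..k} \<times> seqs k n)"
proof (rule set_eqI)
  fix ys
  show "ys \<in> seqs k (Suc n) \<longleftrightarrow> ys \<in> (\<lambda>(x,xs). x#xs) ` ({1..k} \<times> seqs k n)"
    by (cases ys) (auto simp: seqs_def)
qed

lemma seqs_finite: "finite (seqs k n)"
  by (induction n) (auto simp: seqs_Suc, simp add: seqs_def)

lemma tensor_sum:
  fixes f :: "nat \<Rightarrow> real"
  shows "(\<Sum>xs\<in>seqs k n. \<Prod>j<n. f (xs ! j)) = (\<Sum>i=1..k. f i)^n"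
proof (induction n)
  case 0
  have "seqs k 0 = {[]}" by (auto simp: seqs_def)
  then show ?case by simp
next
  case (Suc n)
  have inj: "inj_on (\<lambda>(x,xs). x#xs) ({1..k} \<times> seqs k n)" by (auto simp: inj_on_def)
  have "(\<Sum>xs\<in>seqs k (Suc n). \<Prod>j<Suc n. f (xs ! j))
      = (\<Sum>(x,xs)\<in>{1..k} \<times> seqs k n. \<Prod>j<Suc n. f ((x#xs) ! j))"
    unfolding seqs_Suc by (subst sum.reindex[OF inj]) (simp add: case_prod_unfold)
  also have "\<dots> = (\<Sum>(x,xs)\<in>{1..k} \<times> seqs k n. f x * (\<Prod>j<n. f (xs ! j)))"
    by (intro sum.cong refl) (auto simp: prod.lessThan_Suc_shift simp del: prod.lessThan_Suc)
  also have "\<dots> = (\<Sum>x\<in>{1..k}. \<Sum>xs\<in>seqs k n. f x * (\<Prod>j<n. f (xs ! j)))"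
    by (rule sum.cartesian_product[symmetric])
  also have "\<dots> = (\<Sum>x\<in>{1..k}. f x) * (\<Sum>xs\<in>seqs k n. (\<Prod>j<n. f (xs ! j)))"
    by (simp add: sum_product)
  finally show ?case using Suc by simp
qed




lemma lecam:
  fixes P Q :: "'a \<Rightarrow> real"
  assumes "finite S" "\<And>x. x \<in> S \<Longrightarrow> P x \<ge> 0" "\<And>x. x \<in> S \<Longrightarrow> Q x \<ge> 0"
    "sum P S = 1" "sum Q S = 1"
  shows "(\<Sum>x\<in>S. sqrt (P x * Q x))^2 \<le> 1 - (1 - (\<Sum>x\<in>S. min (P x) (Q x)))^2"
proof -
  have e: "sqrt (P x * Q x) = sqrt (min (P x) (Q x)) * sqrt (max (P x) (Q x))" for x
    by (cases "P x \<le> Q x") (simp_all add: min_def max_def real_sqrt_mult[symmetric] mult.commute)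
  have "(\<Sum>x\<in>S. sqrt (P x * Q x))^2 \<le> (\<Sum>x\<in>S. (sqrt (min (P x) (Q x)))^2) * (\<Sum>x\<in>S. (sqrt (max (P x) (Q x)))^2)"
    unfolding e by (rule Cauchy_Schwarz_ineq_sum)
  also have "\<dots> = (\<Sum>x\<in>S. min (P x) (Q x)) * (\<Sum>x\<in>S. max (P x) (Q x))"
    using assms(2,3) by (intro arg_cong2[where f="(*)"] sum.cong refl) (auto simp: le_max_iff_disj)
  also have "(\<Sum>x\<in>S. max (P x) (Q x)) = (\<Sum>x\<in>S. P x + Q x - min (P x) (Q x))"
    by (intro sum.cong refl) (simp add: max_def min_def)
  also have "\<dots> = 2 - (\<Sum>x\<in>S. min (P x) (Q x))"
    using assms(4,5) by (simp add: sum_subtractf sum.distrib)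
  finally have "(\<Sum>x\<in>S. sqrt (P x * Q x))^2 \<le> (\<Sum>x\<in>S. min (P x) (Q x)) * (2 - (\<Sum>x\<in>S. min (P x) (Q x)))" .
  then show ?thesis by (simp add: power2_eq_square algebra_simps)
qed

lemma sqrt_prod: "sqrt (\<Prod>j\<in>A. f j) = (\<Prod>j\<in>A. sqrt (f j))"
  by (induction A rule: infinite_finite_induct) (auto simp: real_sqrt_mult)




lemma lnD: fixes d :: real assumes "0 < d" "d < 1/4"
  shows "ln (1/d) / 16 \<le> - ln (4*d*(1-d))"
proof (cases "d \<le> 1/16")
  case True
  have "ln (4*d*(1-d)) \<le> ln (4*d)"
    using assms by (intro ln_mono) (auto simp: mult_pos_pos)
  moreover have "ln (4*d) = ln 4 + ln d" using assms by (simp add: ln_mult)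
  moreover have "ln (1/d) = - ln d" using assms by (simp add: ln_div)
  moreover have "ln 16 \<le> ln (1/d)" using assms True by (intro ln_mono) (auto simp: field_simps)
  moreover have "ln (16::real) = 2 * ln 4"
    using ln_realpow[of 4 2] by simp
  moreover have "ln (4::real) > 0" by simp
  ultimately show ?thesis by linarith
next
  case False
  have "0 \<le> (1/2-2*d)*(3/2-2*d)" using assms by (intro mult_nonneg_nonneg) auto
  hence "4*d*(1-d) \<le> 3/4" by (simp add: algebra_simps)
  hence "ln (4*d*(1-d)) \<le> ln (3/4)" using assms by (intro ln_mono) (auto simp: mult_pos_pos)
  moreover have "ln (3/4::real) = - ln (4/3)" by (simp add: ln_div)
  moreover have "ln (1/d) \<le> ln 16" using assms False by (intro ln_mono) (auto simp: field_simps)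
  moreover have "ln (16::real) \<le> 16 * ln (4/3)"
  proof -
    have "4 * ln (4/3::real) = ln ((4/3)^4)" by (simp add: ln_realpow)
    have "ln (2::real) \<le> ln ((4/3)^4)" by (intro ln_mono) (auto simp: power_divide)
    moreover have "ln (16::real) = 4 * ln 2"
      using ln_realpow[of 2 4] by simp
    ultimately show ?thesis using \<open>4 * ln (4/3::real) = ln ((4/3)^4)\<close> by linarith
  qed
  ultimately show ?thesis by linarith
qed




lemma final_arith:
  fixes x eps d L lk :: real and n :: nat
  assumes x: "0<x" "x \<le> 1/2" and pw: "(1-x)^n \<le> 4*d*(1-d)" and d: "0<d" "d<1/4"
    and xd: "x = 16*eps^2/L^2" and e: "0 < eps" and L: "L > 0" "lk \<ge> 0" "lk \<le> 2*L"
  shows "1/2048 * ln(1/d) * lk^2 / eps^2 \<le> real n"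
proof -
  define A where "A = ln (1/d) / 16"
  have A0: "A \<ge> 0" unfolding A_def using d by (simp add: field_simps)
  have "ln ((1-x)^n) \<le> ln (4*d*(1-d))"
    using x pw by (intro ln_mono) auto
  hence "real n * ln (1-x) \<le> ln (4*d*(1-d))" by (simp add: ln_realpow)
  moreover have "- x - 2*x^2 \<le> ln (1-x)" using x by (intro ln_one_minus_pos_lower_bound) auto
  moreover have "2*x^2 \<le> x" using x by (simp add: power2_eq_square)
  ultimately have "real n * (-2*x) \<le> ln (4*d*(1-d))"
    by (smt (verit, best) mult_left_mono of_nat_0_le_iff)
  with lnD[OF d] have "A \<le> 2*x*real n" unfolding A_def by (simp add: algebra_simps)
  hence "A \<le> 32*eps^2*real n / L^2" using xd by simp
  hence n1: "A * L^2 \<le> 32*eps^2*real n" using L by (simp add: field_simps)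
  have "lk^2 \<le> (2*L)^2" using L by (intro power_mono) auto
  hence "A * lk^2 \<le> A * (4*L^2)" using A0 by (intro mult_left_mono) (auto simp: power_mult_distrib)
  with n1 have "A * lk^2 \<le> 128*eps^2*real n" by linarith
  thus ?thesis unfolding A_def using e by (simp add: field_simps)
qed




lemma sum_if1:
  fixes a b :: real assumes "k \<ge> 1"
  shows "(\<Sum>i=1..k. if i = 1 then a else b) = a + (real k - 1) * b"
proof -
  have "(\<Sum>i=1..k. if i = 1 then a else b) = a + (\<Sum>i=Suc 1..k. if i = 1 then a else b)"
    using assms by (subst sum.atLeast_Suc_atMost) auto
  also have "(\<Sum>i=Suc 1..k. if i = 1 then a else b) = (\<Sum>i=Suc 1..k. b)"
    by (intro sum.cong) auto
  also have "\<dots> = (real k - 1) * b" using assms by (simp add: of_nat_diff)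
  finally show ?thesis .
qed

lemma key:
  fixes k n :: nat and eps d :: real and fh
  assumes k: "k \<ge> 1000" and e: "0<eps" "eps<1" and d: "0<d" "d<1/4"
    and est: "estimates_with k (shannon_entropy k) fh eps d n"
  shows "1/2048 * ln(1/d) * (ln (real k))^2 / eps^2 \<le> real n"
proof -
  define K where "K = real k - 1"
  have K: "K \<ge> 999" using k unfolding K_def by simp
  define L where "L = ln K"
  have "exp (6::real) = exp 1 ^ 6" using exp_of_nat_mult[of 6 "1::real"] by simp
  also have "\<dots> \<le> 3^6" by (intro power_mono exp_le) auto
  finally have "exp 6 \<le> K" using K by simp
  hence L6: "6 \<le> L" unfolding L_def using K by (subst ln_ge_iff) auto
  define t where "t = 2*eps/L"
  have t0: "0 < t" using e L6 unfolding t_def by simp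
  have t1: "t \<le> 1/3" using e L6 unfolding t_def by (simp add: field_simps)
  define \<alpha> where "\<alpha> = 1/2 + t"
  define \<beta> where "\<beta> = 1/2 - t"
  have ab: "\<alpha> > 0" "\<beta> > 0" using t0 t1 unfolding \<alpha>_def \<beta>_def by auto
  define p where "p = (\<lambda>i::nat. if i = 1 then \<alpha> else \<beta>/K)"
  define q where "q = (\<lambda>i::nat. if i = 1 then \<beta> else \<alpha>/K)"
  have k1: "k \<ge> 1" using k by simp
  have Kpos: "K > 0" using K by simp
  have p0: "p i \<ge> 0" for i using ab Kpos unfolding p_def by auto
  have q0: "q i \<ge> 0" for i using ab Kpos unfolding q_def by auto
  have sp: "(\<Sum>i=1..k. p i) = 1" unfolding p_def using sum_if1[OF k1] Kpos
    by (simp add: K_def[symmetric] \<alpha>_def \<beta>_def)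
  have sq: "(\<Sum>i=1..k. q i) = 1" unfolding q_def using sum_if1[OF k1] Kpos
    by (simp add: K_def[symmetric] \<alpha>_def \<beta>_def)
  have pS: "p \<in> simplex k" using p0 sp by (simp add: simplex_def)
  have qS: "q \<in> simplex k" using q0 sq by (simp add: simplex_def)
  have Hp: "shannon_entropy k p = \<alpha> * ln (1/\<alpha>) + \<beta> * ln (K/\<beta>)"
  proof -
    have "shannon_entropy k p = (\<Sum>i=1..k. if i = 1 then \<alpha> * ln (1/\<alpha>) else \<beta>/K * ln (K/\<beta>))"
      unfolding shannon_entropy_def p_def by (intro sum.cong) auto
    also have "\<dots> = \<alpha> * ln (1/\<alpha>) + \<beta> * ln (K/\<beta>)"
      using sum_if1[OF k1] Kpos by (simp add: K_def[symmetric])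
    finally show ?thesis .
  qed
  have Hq: "shannon_entropy k q = \<beta> * ln (1/\<beta>) + \<alpha> * ln (K/\<alpha>)"
  proof -
    have "shannon_entropy k q = (\<Sum>i=1..k. if i = 1 then \<beta> * ln (1/\<beta>) else \<alpha>/K * ln (K/\<alpha>))"
      unfolding shannon_entropy_def q_def by (intro sum.cong) auto
    also have "\<dots> = \<beta> * ln (1/\<beta>) + \<alpha> * ln (K/\<alpha>)"
      using sum_if1[OF k1] Kpos by (simp add: K_def[symmetric])
    finally show ?thesis .
  qed
  have Hdiff: "shannon_entropy k q - shannon_entropy k p = 4 * eps"
  proof -
    have eqs: "ln (K/\<alpha>) = L - ln \<alpha>" "ln (K/\<beta>) = L - ln \<beta>" "ln (1/\<alpha>) = - ln \<alpha>" "ln (1/\<beta>) = - ln \<beta>"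
      using ab Kpos by (simp_all add: ln_div L_def)
    have "shannon_entropy k q - shannon_entropy k p = (\<alpha> - \<beta>) * L"
      unfolding Hp Hq eqs by (simp add: algebra_simps)
    also have "\<dots> = 4 * eps" unfolding \<alpha>_def \<beta>_def t_def using L6 by simp
    finally show ?thesis .
  qed
  have bc: "(\<Sum>i=1..k. sqrt (p i * q i)) = 2 * sqrt (\<alpha> * \<beta>)"
  proof -
    have "(\<Sum>i=1..k. sqrt (p i * q i)) = (\<Sum>i=1..k. if i = 1 then sqrt (\<alpha>*\<beta>) else sqrt (\<alpha>*\<beta>) / K)"
    proof (intro sum.cong refl)
      fix i
      have "sqrt (\<beta>/K * (\<alpha>/K)) = sqrt (\<alpha>*\<beta>) / K"
        using Kpos by (simp add: real_sqrt_divide real_sqrt_mult mult.commute)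
      thus "sqrt (p i * q i) = (if i = 1 then sqrt (\<alpha>*\<beta>) else sqrt (\<alpha>*\<beta>) / K)"
        unfolding p_def q_def by (auto simp: mult.commute)
    qed
    also have "\<dots> = 2 * sqrt (\<alpha> * \<beta>)"
      using sum_if1[OF k1] Kpos by (simp add: K_def[symmetric])
    finally show ?thesis .
  qed
  define S where "S = seqs k n"
  define P where "P = (\<lambda>xs. \<Prod>j<n. p (xs ! j))"
  define Q where "Q = (\<lambda>xs. \<Prod>j<n. q (xs ! j))"
  have fin: "finite S" unfolding S_def by (rule seqs_finite)
  have P0: "P xs \<ge> 0" for xs unfolding P_def using p0 by (intro prod_nonneg) auto
  have Q0: "Q xs \<ge> 0" for xs unfolding Q_def using q0 by (intro prod_nonneg) auto
  have sP: "sum P S = 1" unfolding P_def S_def tensor_sum sp by simp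
  have sQ: "sum Q S = 1" unfolding Q_def S_def tensor_sum sq by simp
  have sPQ: "(\<Sum>xs\<in>S. sqrt (P xs * Q xs)) = (2 * sqrt (\<alpha> * \<beta>))^n"
  proof -
    have "(\<Sum>xs\<in>S. sqrt (P xs * Q xs)) = (\<Sum>xs\<in>S. \<Prod>j<n. sqrt (p (xs!j) * q (xs!j)))"
      unfolding P_def Q_def by (simp add: prod.distrib[symmetric] sqrt_prod)
    also have "\<dots> = (2 * sqrt (\<alpha> * \<beta>))^n" unfolding S_def using tensor_sum[where f="\<lambda>i. sqrt (p i * q i)" and k=k and n=n] bc by simp
    finally show ?thesis .
  qed
  have sq4: "((2 * sqrt (\<alpha> * \<beta>))^n)^2 = (1 - 4*t^2)^n"
  proof -
    have "((2 * sqrt (\<alpha> * \<beta>))^n)^2 = ((2 * sqrt (\<alpha> * \<beta>))^2)^n" by (metis power_mult mult.commute)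
    also have "(2 * sqrt (\<alpha> * \<beta>))^2 = 4 * (\<alpha> * \<beta>)" using ab by (simp add: power_mult_distrib)
    also have "4 * (\<alpha> * \<beta>) = 1 - 4*t^2" unfolding \<alpha>_def \<beta>_def by (simp add: algebra_simps power2_eq_square)
    finally show ?thesis .
  qed
  define m where "m = (\<Sum>xs\<in>S. min (P xs) (Q xs))"
  have m0: "m \<ge> 0" unfolding m_def using P0 Q0 by (intro sum_nonneg) auto
  define E1 where "E1 = (\<lambda>xs. \<bar>fh xs - shannon_entropy k p\<bar> > eps)"
  define E2 where "E2 = (\<lambda>xs. \<bar>fh xs - shannon_entropy k q\<bar> > eps)"
  have pr1: "iid_prob k p n E1 \<le> d" using est pS unfolding estimates_with_def E1_def by blast
  have pr2: "iid_prob k q n E2 \<le> d" using est qS unfolding estimates_with_def E2_def by blast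
  have "iid_prob k p n E1 = (\<Sum>xs\<in>S. if E1 xs then P xs else 0)"
    unfolding iid_prob_def P_def S_def using seqs_finite by (simp add: sum.inter_filter)
  moreover have "iid_prob k q n E2 = (\<Sum>xs\<in>S. if E2 xs then Q xs else 0)"
    unfolding iid_prob_def Q_def S_def using seqs_finite by (simp add: sum.inter_filter)
  moreover have "m \<le> (\<Sum>xs\<in>S. if E1 xs then P xs else 0) + (\<Sum>xs\<in>S. if E2 xs then Q xs else 0)"
    unfolding m_def sum.distrib[symmetric]
  proof (intro sum_mono)
    fix xs
    have "E1 xs \<or> E2 xs" using Hdiff e unfolding E1_def E2_def by linarith
    thus "min (P xs) (Q xs) \<le> (if E1 xs then P xs else 0) + (if E2 xs then Q xs else 0)"
      using P0[of xs] Q0[of xs] by auto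
  qed
  ultimately have m2: "m \<le> 2*d" using pr1 pr2 by linarith
  have "(1 - 4*t^2)^n \<le> 1 - (1 - m)^2"
    using lecam[OF fin, of P Q] P0 Q0 sP sQ unfolding sPQ sq4 m_def by blast
  moreover have "(1-2*d)^2 \<le> (1 - m)^2" using m2 d by (intro power_mono) auto
  ultimately have pw: "(1 - 4*t^2)^n \<le> 4*d*(1-d)" by (simp add: power2_eq_square algebra_simps)
  have lk: "ln (real k) \<le> 2 * L"
  proof -
    have kK: "real k = K + 1" using k unfolding K_def by simp
    have "999 * K \<le> K * K" using K by (intro mult_right_mono) auto
    hence "real k \<le> K*K" using K kK by linarith
    hence "real k \<le> K^2" by (simp add: power2_eq_square)
    hence "ln (real k) \<le> ln (K^2)" using k by (intro ln_mono) auto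
    thus ?thesis unfolding L_def by (simp add: ln_realpow)
  qed
  have x1: "0 < 4*t^2" using t0 by simp
  have "t^2 \<le> (1/3)^2" using t0 t1 by (intro power_mono) auto
  hence x2: "4*t^2 \<le> 1/2" by (simp add: power_divide)
  have xd: "4*t^2 = 16*eps^2/L^2" unfolding t_def by (simp add: power_divide power_mult_distrib)
  have Lpos: "L > 0" using L6 by simp
  have lk0: "ln (real k) \<ge> 0" using k by simp
  show ?thesis by (rule final_arith[OF x1 x2 pw d(1) d(2) xd e(1) Lpos lk0 lk])
qed


theorem theorem2:
  shows "\<exists>c::real. c > 0 \<and> (\<exists>k0::nat. \<forall>k\<ge>k0. \<forall>eps delta::real.
           0 < eps \<and> eps < 1 \<and> 0 < delta \<and> delta < 1/4 \<longrightarrow>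
           sample_complexity k (shannon_entropy k) eps delta
             \<ge> ereal (c * ln (1 / delta) * (ln (real k))^2 / eps^2))"
proof -
  have "\<forall>k\<ge>1000. \<forall>eps delta::real.
           0 < eps \<and> eps < 1 \<and> 0 < delta \<and> delta < 1/4 \<longrightarrow>
           sample_complexity k (shannon_entropy k) eps delta
             \<ge> ereal (1/2048 * ln (1 / delta) * (ln (real k))^2 / eps^2)"
  proof (intro allI impI)
    fix k :: nat and eps delta :: real
    assume k: "1000 \<le> k" and h: "0 < eps \<and> eps < 1 \<and> 0 < delta \<and> delta < 1/4"
    show "sample_complexity k (shannon_entropy k) eps delta
             \<ge> ereal (1/2048 * ln (1 / delta) * (ln (real k))^2 / eps^2)"
      unfolding sample_complexity_def
    proof (rule Inf_greatest)
      fix x assume "x \<in> {ereal (real n) |n. \<exists>fh. estimates_with k (shannon_entropy k) fh eps delta n}"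
      then obtain n fh where x: "x = ereal (real n)" and est: "estimates_with k (shannon_entropy k) fh eps delta n"
        by blast
      have "1/2048 * ln (1 / delta) * (ln (real k))^2 / eps^2 \<le> real n"
        using key[OF k _ _ _ _ est] h by blast
      thus "ereal (1/2048 * ln (1 / delta) * (ln (real k))^2 / eps^2) \<le> x" unfolding x by simp
    qed
  qed
  thus ?thesis by (intro exI[of _ "1/2048"]) auto
qed

end
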